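(* Let $k\ge 2$ be an integer. For any positive integer $c$, \[ z_k(c)=\xi_k\sum_{t\in\mathbb{N}\cap[c^{1/k},\infty)}\frac{|\mu(t)|}{t^{2k}}\prod_{p\mid t}\frac{1}{1-\frac{2}{p^k}}, \qquad\text{where}\qquad \xi_k:=\prod_{p}\Bigl(1-(p^k-1)^{-2}\Bigr). \]
   Context: $\mu$ is the Möbius function, $\mu_{k+1}(q)$ is the indicator function of the $(k+1)$-free positive integers, and $p$ always denotes a prime (products over $p$ are over all primes, or over primes dividing the indicated integer). For $c\in\mathbb{N}$, \[ z_k(c):=\sum_{\substack{r\in\mathbb{N}\\ r\ge c}}\ \sum_{d\in\mathbb{N}}\mu(d)\,\mu_{k+1}(dr)\prod_{p\mid dr}\frac{1}{(p^k-1)^2}. \] *)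

theory Defs
  imports "HOL-Analysis.Analysis" "HOL-Computational_Algebra.Squarefree"
begin

definition moebius :: "nat \<Rightarrow> int" where
  "moebius n = (if n = 0 then 0 else if squarefree n then (-1) ^ card (prime_factors n) else 0)"

definition kfree_ind :: "nat \<Rightarrow> nat \<Rightarrow> real" where
  "kfree_ind m q = (if q > 0 \<and> (\<forall>p. prime p \<longrightarrow> \<not> p ^ m dvd q) then 1 else 0)"

definition z :: "nat \<Rightarrow> nat \<Rightarrow> real" where
  "z k c = (\<Sum>\<^sub>\<infinity> r \<in> {r. r \<ge> 1 \<and> r \<ge> c}.
             \<Sum>\<^sub>\<infinity> d \<in> {d. d \<ge> 1}.
               real_of_int (moebius d) * kfree_ind (k + 1) (d * r) *
               (\<Prod>p\<in>prime_factors (d * r). 1 / (real p ^ k - 1) ^ 2))"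

definition xi :: "nat \<Rightarrow> real" where
  "xi k = (\<Prod>n. if prime n then 1 - 1 / (real n ^ k - 1) ^ 2 else 1)"

end

theory Submission
  imports Defs
begin

lemma prime_factors_prod_primes:
  fixes S :: "nat set"
  assumes "finite S" "\<And>p. p \<in> S \<Longrightarrow> prime p"
  shows "prime_factors (\<Prod>S) = S"
proof -
  have "prime_factorization (\<Prod>S) = (\<Sum>n\<in>S. prime_factorization n)"
    using assms by (intro prime_factorization_prod) (auto dest: prime_gt_0_nat)
  also have "\<dots> = (\<Sum>n\<in>S. {#n#})"
    using assms by (intro sum.cong) (auto simp: prime_factorization_prime)
  finally show ?thesis using assms(1) by simp
qed

lemma squarefree_prod_primes:
  fixes S :: "nat set"
  assumes "finite S" "\<And>p. p \<in> S \<Longrightarrow> prime p"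
  shows "squarefree (\<Prod>S)"
  using assms
  by (intro squarefree_prod_coprime) (auto intro: squarefree_prime simp: primes_coprime)

lemma moebius_prod_primes:
  fixes S :: "nat set"
  assumes "finite S" "\<And>p. p \<in> S \<Longrightarrow> prime p"
  shows "moebius (\<Prod>S) = (-1) ^ card S"
proof -
  have "\<Prod>S \<noteq> 0" using assms by (auto dest: prime_gt_0_nat)
  then show ?thesis unfolding moebius_def
    using squarefree_prod_primes[OF assms] prime_factors_prod_primes[OF assms] by simp
qed

lemma prod_prime_factors_squarefree:
  fixes d :: nat
  assumes "squarefree d"
  shows "\<Prod>(prime_factors d) = d"
proof -
  have d0: "d \<noteq> 0" using assms by (metis not_squarefree_0)
  have "(\<Prod>p \<in> prime_factors d. p ^ multiplicity p d) = d"
    using prod_prime_factors[OF d0] by simp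
  moreover have "(\<Prod>p \<in> prime_factors d. p ^ multiplicity p d) = \<Prod>(prime_factors d)"
    using assms d0 squarefree_factorial_semiring'[OF d0] by (intro prod.cong) auto
  ultimately show ?thesis by simp
qed

lemma moebius_mult_prime:
  fixes q d :: nat
  assumes "prime q" "\<not> q dvd d" "d > 0"
  shows "moebius (q * d) = - moebius d"
proof -
  have cop: "coprime q d" using assms by (simp add: prime_imp_coprime)
  have sq: "squarefree (q * d) \<longleftrightarrow> squarefree d"
    using squarefree_mult_coprime[OF cop] squarefree_prime[OF assms(1)] squarefree_multD by blast
  have pf: "prime_factors (q * d) = insert q (prime_factors d)"
    using assms by (simp add: prime_factors_product prime_prime_factors prime_gt_0_nat)
  have "q \<notin> prime_factors d" using assms by auto
  then have "card (prime_factors (q*d)) = Suc (card (prime_factors d))" by (simp add: pf)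
  then show ?thesis unfolding moebius_def using sq assms by (auto simp: prime_gt_0_nat)
qed

lemma kfree_ind_mult:
  "kfree_ind m n = (if n > 0 \<and> (\<forall>p. prime p \<longrightarrow> multiplicity p n < m) then 1 else 0)"
proof (cases "n > 0")
  case True
  have "(\<forall>p. prime p \<longrightarrow> \<not> p ^ m dvd n) \<longleftrightarrow> (\<forall>p. prime p \<longrightarrow> multiplicity p n < m)"
  proof -
    have "p ^ m dvd n \<longleftrightarrow> m \<le> multiplicity p n" if "prime p" for p
      using True that by (intro power_dvd_iff_le_multiplicity) auto
    then show ?thesis by (meson not_le)
  qed
  then show ?thesis unfolding kfree_ind_def by simp
qed (simp add: kfree_ind_def)

definition aa :: "nat \<Rightarrow> nat \<Rightarrow> real" where
  "aa k p = 1 / (real p ^ k - 1) ^ 2"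

definition gg :: "nat \<Rightarrow> nat \<Rightarrow> real" where
  "gg k n = (\<Prod>p\<in>prime_factors n. aa k p)"

definition ff :: "nat \<Rightarrow> nat \<Rightarrow> nat \<Rightarrow> real" where
  "ff k r d = real_of_int (moebius d) * kfree_ind (k + 1) (d * r) * gg k (d * r)"

lemma z_alt: "z k c = (\<Sum>\<^sub>\<infinity> r \<in> {r. r \<ge> 1 \<and> r \<ge> c}. \<Sum>\<^sub>\<infinity> d \<in> {d. d \<ge> 1}. ff k r d)"
  unfolding z_def ff_def gg_def aa_def by (rule refl)

lemma aa_bounds:
  assumes "k \<ge> 2" "prime p"
  shows "0 < aa k p" "aa k p \<le> 1 / (real p)^2" "aa k p < 1"
proof -
  have p2: "real p \<ge> 2" using assms prime_ge_2_nat by auto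
  have h1: "real p ^ 2 \<le> real p ^ k" using assms p2 by (intro power_increasing) auto
  have pp: "real p * 2 \<le> real p * real p" using p2 by (intro mult_left_mono) auto
  have p4: "real p ^ 2 \<ge> 4" using pp p2 unfolding power2_eq_square by linarith
  have "real p + 1 \<le> real p ^ 2" using pp p2 unfolding power2_eq_square by linarith
  with h1 have pk: "real p \<le> real p ^ k - 1" by linarith
  then have pos: "0 < real p ^ k - 1" using p2 by linarith
  show "0 < aa k p" unfolding aa_def using pos by simp
  have "(real p)^2 \<le> (real p ^ k - 1) ^ 2" using pk p2 by (intro power_mono) auto
  then show "aa k p \<le> 1 / (real p)^2" unfolding aa_def using p2
    by (intro divide_left_mono) auto
  also have "\<dots> < 1" using p4 by (subst divide_less_eq_1) auto
  finally show "aa k p < 1" .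
qed

lemma aa_pf:
  assumes "k \<ge> 2" "p \<in> prime_factors n"
  shows "0 \<le> aa k p" "aa k p \<le> 1" "aa k p \<le> 1 / (real p)^2"
  using aa_bounds[OF assms(1) in_prime_factors_imp_prime[OF assms(2)]] by auto

lemma gg_nonneg: "k \<ge> 2 \<Longrightarrow> 0 \<le> gg k n"
  unfolding gg_def using aa_pf(1) by (intro prod_nonneg) blast

lemma gg_le_1: "k \<ge> 2 \<Longrightarrow> gg k n \<le> 1"
  unfolding gg_def using aa_pf(1,2) by (intro prod_le_1) blast+

lemma gg_mono:
  assumes "k \<ge> 2" "d > 0" "r > 0"
  shows "gg k (d * r) \<le> gg k d"
proof -
  have pf: "prime_factors (d * r) = prime_factors d \<union> (prime_factors r - prime_factors d)"
    using assms by (auto simp: prime_factors_product)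
  have "gg k (d * r) = gg k d * (\<Prod>p\<in>prime_factors r - prime_factors d. aa k p)"
    unfolding gg_def pf by (subst prod.union_disjoint) auto
  also have "\<dots> \<le> gg k d * 1"
    using assms aa_pf(1,2)[OF assms(1)] gg_nonneg[OF assms(1)]
    by (intro mult_left_mono prod_le_1) blast+
  finally show ?thesis by simp
qed

lemma gg_squarefree_bound:
  assumes "k \<ge> 2" "squarefree d"
  shows "gg k d \<le> 1 / (real d)^2"
proof -
  have "gg k d \<le> (\<Prod>p\<in>prime_factors d. 1 / (real p)^2)"
    unfolding gg_def using aa_pf[OF assms(1)]
    by (intro prod_mono) blast
  also have "\<dots> = 1 / (real (\<Prod>(prime_factors d)))^2"
    by (simp add: prod_dividef prod_power_distrib)
  also have "\<dots> = 1 / (real d)^2"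
    using prod_prime_factors_squarefree[OF assms(2)] by simp
  finally show ?thesis .
qed

lemma ff_bound:
  assumes "k \<ge> 2" "r > 0"
  shows "\<bar>ff k r d\<bar> \<le> 1 / (real d)^2"
proof (cases "squarefree d")
  case False
  then have "moebius d = 0" unfolding moebius_def by auto
  then show ?thesis unfolding ff_def by simp
next
  case True
  then have d0: "d > 0" by (metis gr0I not_squarefree_0)
  have m: "\<bar>real_of_int (moebius d)\<bar> = 1" unfolding moebius_def using True d0 by simp
  have kf: "\<bar>kfree_ind (k+1) (d*r)\<bar> \<le> 1" unfolding kfree_ind_def by simp
  have "\<bar>ff k r d\<bar> = \<bar>kfree_ind (k+1) (d*r)\<bar> * gg k (d*r)"
    unfolding ff_def using m gg_nonneg[OF assms(1)] by (simp add: abs_mult)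
  also have "\<dots> \<le> 1 * gg k d"
    using kf gg_mono[OF assms(1) d0 assms(2)] gg_nonneg[OF assms(1)]
    by (intro mult_mono) auto
  also have "\<dots> \<le> 1 / (real d)^2" using gg_squarefree_bound[OF assms(1) True] by simp
  finally show ?thesis .
qed

lemma summable_by_inv_sq:
  fixes f :: "nat \<Rightarrow> real"
  assumes "\<And>d. \<bar>f d\<bar> \<le> 1 / (real d)^2"
  shows "f summable_on A"
proof -
  have s: "summable (\<lambda>n. inverse (real n ^ 2))" by (rule inverse_power_summable) simp
  have "(\<lambda>n. inverse (real n ^ 2)) summable_on UNIV"
    using s by (subst summable_on_UNIV_nonneg_real_iff) simp_all
  then have "(\<lambda>n. inverse (real n ^ 2)) summable_on A" by (rule summable_on_subset) simp
  then have "(\<lambda>n. \<bar>f n\<bar>) summable_on A"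
  proof (rule summable_on_comparison_test)
    fix x show "\<bar>f x\<bar> \<le> inverse (real x ^ 2)" using assms[of x] by (simp add: inverse_eq_divide)
  qed simp
  then show ?thesis by (subst summable_on_iff_abs_summable_on_real) simp
qed

lemma pf_power: "n > 0 \<Longrightarrow> prime_factors (x ^ n) = prime_factors (x::nat)"
  by (cases "x = 0"; cases "n = 0")
     (auto simp: prime_factors_multiplicity prime_elem_multiplicity_power_distrib zero_power)

lemma mult_mult:
  fixes p x y :: nat
  assumes "prime p" "x > 0" "y > 0"
  shows "multiplicity p (x * y) = multiplicity p x + multiplicity p y"
  using assms by (intro prime_elem_multiplicity_mult_distrib) auto

lemma mult_pow:
  fixes p x :: nat
  assumes "prime p" "x > 0"
  shows "multiplicity p (x ^ n) = n * multiplicity p x"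
  using assms by (intro prime_elem_multiplicity_power_distrib) auto

lemma mult_sqf_le1:
  fixes p x :: nat
  assumes "squarefree x" "prime p"
  shows "multiplicity p x \<le> 1"
proof -
  have "x \<noteq> 0" using assms by (metis not_squarefree_0)
  then show ?thesis using assms squarefree_factorial_semiring'' by blast
qed

lemma ff_power_case:
  fixes t d k :: nat
  assumes k: "k \<ge> 2" and t: "squarefree t" and d: "d \<ge> 1"
  shows "ff k (t ^ k) d = (if coprime d t then gg k t * (real_of_int (moebius d) * gg k d) else 0)"
proof -
  have t0: "t > 0" using t by (metis gr0I not_squarefree_0)
  have tk0: "t ^ k > 0" using t0 by simp
  have d0: "d > 0" using d by simp
  show ?thesis
  proof (cases "coprime d t")
    case False
    then have "gcd d t \<noteq> 1" by (simp add: coprime_iff_gcd_eq_1)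
    then obtain p where "prime p" "p dvd gcd d t" using prime_factor_nat by blast
    then have p: "prime p" "p dvd d" "p dvd t" by auto
    have "multiplicity p d \<ge> 1" "multiplicity p t \<ge> 1"
      using p d0 t0 by (auto intro!: multiplicity_geI)
    then have "k * 1 \<le> k * multiplicity p t" "multiplicity p d \<ge> 1"
      by (intro mult_le_mono2, simp, simp)
    moreover have "multiplicity p (d * t ^ k) = multiplicity p d + k * multiplicity p t"
      using p d0 t0 by (simp add: mult_mult mult_pow)
    ultimately have "multiplicity p (d * t ^ k) \<ge> k + 1" by linarith
    then have "kfree_ind (k+1) (d * t ^ k) = 0"
      unfolding kfree_ind_mult using p by auto
    then show ?thesis using False unfolding ff_def by simp
  next
    case True
    show ?thesis
    proof (cases "squarefree d")
      case False
      then have "moebius d = 0" unfolding moebius_def by auto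
      then show ?thesis unfolding ff_def by simp
    next
      case sq: True
      have "multiplicity p (d * t ^ k) < k + 1" if p: "prime p" for p
      proof -
        have a: "multiplicity p d \<le> 1" "multiplicity p t \<le> 1"
          using mult_sqf_le1 sq t p by auto
        have "\<not> (p dvd d \<and> p dvd t)"
          using True p by (meson coprime_common_divisor not_prime_unit)
        then have "multiplicity p d = 0 \<or> multiplicity p t = 0"
          by (auto simp: not_dvd_imp_multiplicity_0)
        moreover have e: "multiplicity p (d * t ^ k) = multiplicity p d + k * multiplicity p t"
          using p d0 t0 by (simp add: mult_mult mult_pow)
        moreover have kt: "k * multiplicity p t \<le> k * 1" using a(2) by (intro mult_le_mono2)
        ultimately show ?thesis using a k
        proof (elim disjE)
          assume "multiplicity p d = 0" then show ?thesis using e kt by linarith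
        next
          assume "multiplicity p t = 0" then show ?thesis using e a k by simp
        qed
      qed
      then have kf: "kfree_ind (k+1) (d * t ^ k) = 1"
        unfolding kfree_ind_mult using d0 t0 by auto
      have pf: "prime_factors (d * t ^ k) = prime_factors d \<union> prime_factors t"
        using d0 t0 k by (simp add: prime_factors_product pf_power)
      have disj: "prime_factors d \<inter> prime_factors t = {}"
        using True by (auto simp: in_prime_factors_iff
          dest: coprime_common_divisor[of d t] simp: not_prime_unit)
      have "gg k (d * t ^ k) = gg k d * gg k t"
        unfolding gg_def pf by (rule prod.union_disjoint) (use disj in auto)
      then show ?thesis using True kf unfolding ff_def by simp
    qed
  qed
qed

lemma ff_summable: "k \<ge> 2 \<Longrightarrow> r > 0 \<Longrightarrow> ff k r summable_on A"
  by (rule summable_by_inv_sq) (rule ff_bound)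

lemma not_power_imp:
  fixes r k :: nat
  assumes k: "k \<ge> 2" and r: "r > 0" and np: "\<not> (\<exists>t. squarefree t \<and> r = t ^ k)"
    and le: "\<And>p. prime p \<Longrightarrow> multiplicity p r \<le> k"
  shows "\<exists>q. prime q \<and> q dvd r \<and> multiplicity q r < k"
proof (rule ccontr)
  assume nq: "\<not> ?thesis"
  have eqk: "multiplicity p r = k" if "prime p" "p dvd r" for p
  proof -
    have "\<not> multiplicity p r < k" using that nq by blast
    then show ?thesis using le[OF that(1)] by linarith
  qed
  define t where "t = \<Prod>(prime_factors r)"
  have fin: "finite (prime_factors r)" by simp
  have pr: "\<And>p. p \<in> prime_factors r \<Longrightarrow> prime p" by (auto dest: in_prime_factors_imp_prime)
  have sqt: "squarefree t" unfolding t_def by (rule squarefree_prod_primes[OF fin pr])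
  have pft: "prime_factors t = prime_factors r" unfolding t_def by (rule prime_factors_prod_primes[OF fin pr])
  have t0: "t > 0" using sqt by (metis gr0I not_squarefree_0)
  have "multiplicity p r = multiplicity p (t ^ k)" if p: "prime p" for p
  proof (cases "p dvd r")
    case True
    then have "p \<in> prime_factors t" using pft p r by (auto simp: in_prime_factors_iff)
    moreover have "t \<noteq> 0" using t0 by simp
    ultimately have "multiplicity p t = 1" using sqt squarefree_factorial_semiring'[of t] by blast
    then show ?thesis using eqk[OF p True] p t0 by (simp add: mult_pow)
  next
    case False
    then have "p \<notin> prime_factors t" using pft p r by (auto simp: in_prime_factors_iff)
    then have "\<not> p dvd t" using p t0 by (auto simp: in_prime_factors_iff)
    then show ?thesis using False p t0 by (simp add: mult_pow not_dvd_imp_multiplicity_0)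
  qed
  then have "normalize r = normalize (t ^ k)"
    using r t0 by (intro multiplicity_eq_imp_eq) auto
  then have "r = t ^ k" by simp
  then show False using np sqt by blast
qed

lemma inner_vanish:
  fixes r k :: nat
  assumes k: "k \<ge> 2" and r: "r > 0" and np: "\<not> (\<exists>t. squarefree t \<and> r = t ^ k)"
  shows "(\<Sum>\<^sub>\<infinity> d \<in> {d. d \<ge> 1}. ff k r d) = 0"
proof (cases "\<exists>p. prime p \<and> multiplicity p r > k")
  case True
  then obtain p where p: "prime p" "multiplicity p r > k" by blast
  have "ff k r d = 0" if "d \<in> {d. d \<ge> 1}" for d
  proof -
    have "multiplicity p (d * r) = multiplicity p d + multiplicity p r"
      using that p r by (simp add: mult_mult)
    then have "\<not> multiplicity p (d * r) < k + 1" using p by simp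
    then have "kfree_ind (k+1) (d * r) = 0" unfolding kfree_ind_mult using p by auto
    then show ?thesis unfolding ff_def by simp
  qed
  then show ?thesis by (rule infsum_0)
next
  case False
  then obtain q where q: "prime q" "q dvd r" "multiplicity q r < k"
    using not_power_imp[OF k r np] by (meson not_le)
  define A where "A = {d::nat. d \<ge> 1 \<and> \<not> q dvd d}"
  define B where "B = {d::nat. d \<ge> 1 \<and> q dvd d}"
  have q0: "q > 0" using q prime_gt_0_nat by blast
  have AB: "{d::nat. d \<ge> 1} = A \<union> B" "A \<inter> B = {}" unfolding A_def B_def by auto
  have neg: "ff k r (q * d) = - ff k r d" if d: "d \<in> A" for d
  proof -
    have d0: "d > 0" "\<not> q dvd d" using d unfolding A_def by auto
    have mu: "moebius (q * d) = - moebius d" using moebius_mult_prime q d0 by blast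
    have mq: "multiplicity q d = 0" using d0 by (simp add: not_dvd_imp_multiplicity_0)
    have "multiplicity p (q * d * r) < k + 1 \<longleftrightarrow> multiplicity p (d * r) < k + 1"
      if p: "prime p" for p
    proof (cases "p = q")
      case True
      then show ?thesis using q d0 r mq q0 by (simp add: mult_mult)
    next
      case False
      then have "multiplicity p q = 0" using p q by (simp add: prime_multiplicity_other)
      then show ?thesis using q d0 r p q0 by (simp add: mult_mult)
    qed
    then have kf: "kfree_ind (k+1) (q * d * r) = kfree_ind (k+1) (d * r)"
      unfolding kfree_ind_mult using q0 d0 r by auto
    have "prime_factors (q * d * r) = prime_factors q \<union> prime_factors (d * r)"
      using q0 d0 r by (simp add: prime_factors_product mult.assoc)
    also have "\<dots> = prime_factors (d * r)"
      using q d0 r by (auto simp: prime_prime_factors prime_factors_product in_prime_factors_iff)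
    finally have "gg k (q * d * r) = gg k (d * r)" unfolding gg_def by simp
    then show ?thesis unfolding ff_def using mu kf by (simp add: mult.assoc)
  qed
  have inj: "inj_on (\<lambda>d. q * d) A" using q0 by (auto simp: inj_on_def)
  have "(\<Sum>\<^sub>\<infinity> d \<in> B. ff k r d) = (\<Sum>\<^sub>\<infinity> d \<in> (\<lambda>d. q * d) ` A. ff k r d)"
  proof (rule infsum_cong_neutral)
    fix d assume "d \<in> B - (\<lambda>d. q * d) ` A"
    then obtain e where e: "d = q * e" "e \<ge> 1" "q dvd e"
      unfolding A_def B_def by (auto elim!: dvdE)
    then have "q * q dvd d" by auto
    then have "\<not> squarefree d" using q
      by (metis not_prime_unit not_squarefreeI power2_eq_square)
    then have "moebius d = 0" unfolding moebius_def by auto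
    then show "ff k r d = 0" unfolding ff_def by simp
  qed (use q0 in \<open>auto simp: A_def B_def\<close>)
  also have "\<dots> = (\<Sum>\<^sub>\<infinity> d \<in> A. ff k r (q * d))"
    using infsum_reindex[OF inj] by (simp add: comp_def)
  also have "\<dots> = (\<Sum>\<^sub>\<infinity> d \<in> A. - ff k r d)"
    by (rule infsum_cong) (rule neg)
  also have "\<dots> = - (\<Sum>\<^sub>\<infinity> d \<in> A. ff k r d)" by (rule infsum_uminus)
  finally have "(\<Sum>\<^sub>\<infinity> d \<in> B. ff k r d) = - (\<Sum>\<^sub>\<infinity> d \<in> A. ff k r d)" .
  moreover have "(\<Sum>\<^sub>\<infinity> d \<in> A \<union> B. ff k r d) = (\<Sum>\<^sub>\<infinity> d \<in> A. ff k r d) + (\<Sum>\<^sub>\<infinity> d \<in> B. ff k r d)"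
    using ff_summable[OF k r] AB(2) by (intro infsum_Un_disjoint) auto
  ultimately show ?thesis using AB(1) by simp
qed

lemma f0_bound:
  assumes "k \<ge> 2"
  shows "\<bar>real_of_int (moebius d) * gg k d\<bar> \<le> 1 / (real d)^2"
proof (cases "squarefree d")
  case False
  then have "moebius d = 0" unfolding moebius_def by auto
  then show ?thesis by simp
next
  case True
  then have d0: "d > 0" by (metis gr0I not_squarefree_0)
  have m: "\<bar>real_of_int (moebius d)\<bar> = 1" unfolding moebius_def using True d0 by simp
  then have "\<bar>real_of_int (moebius d) * gg k d\<bar> = gg k d"
    using gg_nonneg[OF assms] by (simp add: abs_mult)
  then show ?thesis using gg_squarefree_bound[OF assms True] by simp
qed

definition phi :: "nat \<Rightarrow> nat \<Rightarrow> real" where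
  "phi k n = (if prime n then 1 - aa k n else 1)"

lemma xi_alt: "xi k = prodinf (phi k)"
  unfolding xi_def phi_def aa_def by (rule refl)

lemma phi_tendsto:
  assumes k: "k \<ge> 2"
  shows "(\<lambda>N. \<Prod>n\<le>N. phi k n) \<longlonglongrightarrow> xi k"
proof -
  have s: "summable (\<lambda>n. inverse (real n ^ 2))" by (rule inverse_power_summable) simp
  have "summable (\<lambda>n. norm (phi k n - 1))"
  proof (rule summable_comparison_test'[OF s])
    fix n :: nat
    show "norm (norm (phi k n - 1)) \<le> inverse (real n ^ 2)"
    proof (cases "prime n")
      case True
      then show ?thesis using aa_bounds[OF k True] unfolding phi_def
        by (simp add: inverse_eq_divide)
    next
      case False
      then show ?thesis unfolding phi_def by simp
    qed
  qed
  then have "abs_convergent_prod (phi k)" by (rule summable_imp_abs_convergent_prod)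
  then have "convergent_prod (phi k)" by (rule abs_convergent_prod_imp_convergent_prod)
  then show ?thesis unfolding xi_alt by (rule convergent_prod_LIMSEQ)
qed

lemma sum_sets:
  fixes A :: "nat set"
  assumes fin: "finite A" and pr: "\<And>p. p \<in> A \<Longrightarrow> prime p"
  shows "(\<Sum>d\<in>(\<lambda>S. \<Prod>S) ` Pow A. real_of_int (moebius d) * gg k d) = (\<Prod>p\<in>A. 1 - aa k p)"
proof -
  have inj: "inj_on (\<lambda>S. \<Prod>S) (Pow A)"
  proof (rule inj_onI)
    fix S S' assume S: "S \<in> Pow A" and S': "S' \<in> Pow A" and eq: "\<Prod>S = \<Prod>S'"
    have fS: "finite S" using S fin finite_subset by auto
    have fS': "finite S'" using S' fin finite_subset by auto
    have "prime_factors (\<Prod>S) = S" using S pr by (intro prime_factors_prod_primes[OF fS]) auto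
    moreover have "prime_factors (\<Prod>S') = S'" using S' pr by (intro prime_factors_prod_primes[OF fS']) auto
    ultimately show "S = S'" using eq by metis
  qed
  have "(\<Sum>d\<in>(\<lambda>S. \<Prod>S) ` Pow A. real_of_int (moebius d) * gg k d)
      = (\<Sum>S\<in>Pow A. real_of_int (moebius (\<Prod>S)) * gg k (\<Prod>S))"
    by (subst sum.reindex[OF inj]) (simp add: comp_def)
  also have "\<dots> = (\<Sum>S\<in>Pow A. (-1) ^ card S * (\<Prod>p\<in>S. aa k p) * (\<Prod>p\<in>A - S. 1))"
  proof (intro sum.cong refl)
    fix S assume S: "S \<in> Pow A"
    have fS: "finite S" using S fin finite_subset by auto
    have pS: "\<And>p. p \<in> S \<Longrightarrow> prime p" using S pr by auto
    have m: "moebius (\<Prod>S) = (-1) ^ card S" by (rule moebius_prod_primes[OF fS pS])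
    have g: "gg k (\<Prod>S) = (\<Prod>p\<in>S. aa k p)" unfolding gg_def using prime_factors_prod_primes[OF fS pS] by simp
    show "real_of_int (moebius (\<Prod>S)) * gg k (\<Prod>S) = (-1) ^ card S * (\<Prod>p\<in>S. aa k p) * (\<Prod>p\<in>A - S. 1)"
      unfolding m g by simp
  qed
  also have "\<dots> = (\<Prod>p\<in>A. 1 - aa k p)"
    by (rule prod_diff_conv_sum[symmetric]) (rule fin)
  finally show ?thesis .
qed

lemma euler:
  fixes k r :: nat
  assumes k: "k \<ge> 2" and r: "r > 0"
  shows "(\<Sum>\<^sub>\<infinity> d \<in> {d. d \<ge> 1 \<and> coprime d r}. real_of_int (moebius d) * gg k d)
         = xi k / (\<Prod>p\<in>prime_factors r. 1 - aa k p)"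
proof -
  define f0 where "f0 = (\<lambda>d. real_of_int (moebius d) * gg k d)"
  define D where "D = {d::nat. d \<ge> 1 \<and> coprime d r}"
  define T where "T = infsum f0 D"
  define P where "P = (\<lambda>N. {p::nat. prime p \<and> p \<le> N \<and> \<not> p dvd r})"
  define E where "E = (\<lambda>N. (\<lambda>S. \<Prod>S) ` Pow (P N) \<union> {d\<in>D. d \<le> N})"
  define C where "C = (\<Prod>p\<in>prime_factors r. 1 - aa k p)"
  have finP: "finite (P N)" for N unfolding P_def by (rule finite_subset[of _ "{..N}"]) auto
  have primeP: "\<And>p. p \<in> P N \<Longrightarrow> prime p" for N unfolding P_def by auto
  have finE: "finite (E N)" for N unfolding E_def using finP by auto
  have ED: "E N \<subseteq> D" for N
  proof -
    have "\<Prod>S \<in> D" if "S \<subseteq> P N" for S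
    proof -
      have fS: "finite S" using that finP finite_subset by blast
      have "\<Prod>S > 0" using that primeP by (intro prod_pos) (auto simp: prime_gt_0_nat)
      moreover have "coprime (\<Prod>S) r"
        using that by (intro prod_coprime_left prime_imp_coprime) (auto simp: P_def)
      ultimately show ?thesis unfolding D_def by simp
    qed
    then show ?thesis unfolding E_def by auto
  qed
  have sumE: "sum f0 (E N) = (\<Prod>p\<in>P N. 1 - aa k p)" for N
  proof -
    have z0: "\<forall>x\<in>E N - (\<lambda>S. \<Prod>S) ` Pow (P N). f0 x = 0"
    proof (intro ballI)
      fix x assume x: "x \<in> E N - (\<lambda>S. \<Prod>S) ` Pow (P N)"
      show "f0 x = 0"
      proof (rule ccontr)
        assume nz: "f0 x \<noteq> 0"
        then have "moebius x \<noteq> 0" unfolding f0_def by auto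
        then have sq: "squarefree x" by (cases "squarefree x") (simp_all add: moebius_def split: if_splits)
        have xD: "x \<in> D" "x \<le> N" using x unfolding E_def by auto
        have "prime_factors x \<subseteq> P N"
        proof
          fix p assume p: "p \<in> prime_factors x"
          then have pp: "prime p" "p dvd x" "x > 0" by (auto simp: in_prime_factors_iff)
          have "p \<le> x" using pp by (simp add: dvd_imp_le)
          then have "p \<le> N" using xD(2) by linarith
          moreover have "\<not> p dvd r"
          proof
            assume "p dvd r"
            moreover have "coprime x r" using xD(1) unfolding D_def by simp
            ultimately have "is_unit p" using pp(2) coprime_common_divisor by blast
            then show False using pp(1) by simp
          qed
          ultimately show "p \<in> P N" using pp unfolding P_def by auto
        qed
        moreover have "x = \<Prod>(prime_factors x)" using prod_prime_factors_squarefree[OF sq] by simp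
        ultimately have "x \<in> (\<lambda>S. \<Prod>S) ` Pow (P N)" by (intro image_eqI) auto
        then show False using x by blast
      qed
    qed
    have "sum f0 (E N) = sum f0 ((\<lambda>S. \<Prod>S) ` Pow (P N))"
      by (rule sum.mono_neutral_right[OF finE _ z0]) (unfold E_def, rule Un_upper1)
    also have "\<dots> = (\<Prod>p\<in>P N. 1 - aa k p)" unfolding f0_def by (rule sum_sets[OF finP primeP])
    finally show ?thesis .
  qed
  have summ: "f0 summable_on D" unfolding f0_def by (rule summable_by_inv_sq) (rule f0_bound[OF k])
  have hs: "(f0 has_sum T) D" unfolding T_def using summ by (rule has_sum_infsum)
  have flim: "filterlim E (finite_subsets_at_top D) sequentially"
    unfolding filterlim_iff
  proof (intro allI impI)
    fix Q assume "eventually Q (finite_subsets_at_top D)"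
    then obtain X where X: "finite X" "X \<subseteq> D" "\<And>Y. finite Y \<Longrightarrow> X \<subseteq> Y \<Longrightarrow> Y \<subseteq> D \<Longrightarrow> Q Y"
      by (subst (asm) eventually_finite_subsets_at_top) (elim exE conjE, metis)
    show "eventually (\<lambda>N. Q (E N)) sequentially"
      unfolding eventually_sequentially
    proof (intro exI allI impI)
      fix N assume N: "N \<ge> Max (insert 0 X)"
      have "X \<subseteq> E N"
      proof
        fix x assume "x \<in> X"
        then have "x \<le> Max (insert 0 X)" using X(1) by simp
        then have "x \<le> N" using N by linarith
        then have "x \<in> {d\<in>D. d \<le> N}" using \<open>x \<in> X\<close> X(2) by auto
        then show "x \<in> E N" unfolding E_def by (rule UnI2)
      qed
      then show "Q (E N)" by (rule X(3)[OF finE _ ED])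
    qed
  qed
  have lim1: "(\<lambda>N. sum f0 (E N)) \<longlonglongrightarrow> T"
    using filterlim_compose[OF hs[unfolded has_sum_def] flim] .
  have "C > 0" unfolding C_def
  proof (rule prod_pos)
    fix p assume "p \<in> prime_factors r"
    then have "aa k p < 1" using aa_bounds[OF k] by (auto dest: in_prime_factors_imp_prime)
    then show "0 < 1 - aa k p" by simp
  qed
  then have C0: "C \<noteq> 0" by simp
  have ev: "eventually (\<lambda>N. (\<Prod>n\<le>N. phi k n) / C = sum f0 (E N)) sequentially"
    unfolding eventually_sequentially
  proof (intro exI allI impI)
    fix N assume N: "N \<ge> r"
    have "(\<Prod>n\<le>N. phi k n) = (\<Prod>n\<in>{n\<in>{..N}. prime n}. 1 - aa k n)"
      unfolding phi_def by (subst prod.inter_filter) auto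
    also have "{n\<in>{..N}. prime n} = P N \<union> prime_factors r"
    proof -
      have "p \<le> N" if "p \<in> prime_factors r" for p
        using that N r by (auto simp: in_prime_factors_iff dest!: dvd_imp_le)
      then show ?thesis unfolding P_def by (auto simp: in_prime_factors_iff r)
    qed
    also have "(\<Prod>n\<in>P N \<union> prime_factors r. 1 - aa k n) = (\<Prod>n\<in>P N. 1 - aa k n) * C"
      unfolding C_def by (rule prod.union_disjoint) (use finP in \<open>auto simp: P_def in_prime_factors_iff\<close>)
    finally show "(\<Prod>n\<le>N. phi k n) / C = sum f0 (E N)" using C0 sumE by simp
  qed
  have lim2: "(\<lambda>N. (\<Prod>n\<le>N. phi k n) / C) \<longlonglongrightarrow> xi k / C"
    by (intro tendsto_divide phi_tendsto[OF k] tendsto_const C0)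
  have "(\<lambda>N. sum f0 (E N)) \<longlonglongrightarrow> xi k / C"
    using lim2 ev by (rule Lim_transform_eventually)
  then have "T = xi k / C" using lim1 LIMSEQ_unique by blast
  then show ?thesis unfolding T_def f0_def D_def C_def .
qed

lemma inner_power:
  fixes t k :: nat
  assumes k: "k \<ge> 2" and t: "squarefree t"
  shows "(\<Sum>\<^sub>\<infinity> d \<in> {d. d \<ge> 1}. ff k (t ^ k) d)
         = xi k * (\<Prod>p\<in>prime_factors t. aa k p / (1 - aa k p))"
proof -
  have t0: "t > 0" using t by (metis gr0I not_squarefree_0)
  have "(\<Sum>\<^sub>\<infinity> d \<in> {d. d \<ge> 1}. ff k (t ^ k) d)
      = (\<Sum>\<^sub>\<infinity> d \<in> {d. d \<ge> 1 \<and> coprime d t}. gg k t * (real_of_int (moebius d) * gg k d))"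
  proof (rule infsum_cong_neutral)
    fix d assume "d \<in> {d. d \<ge> 1} - {d. d \<ge> 1 \<and> coprime d t}"
    then show "ff k (t ^ k) d = 0" using ff_power_case[OF k t, of d] by auto
  next
    fix d assume "d \<in> {d. d \<ge> 1} \<inter> {d. d \<ge> 1 \<and> coprime d t}"
    then show "ff k (t ^ k) d = gg k t * (real_of_int (moebius d) * gg k d)"
      using ff_power_case[OF k t, of d] by auto
  qed auto
  also have "\<dots> = gg k t * (\<Sum>\<^sub>\<infinity> d \<in> {d. d \<ge> 1 \<and> coprime d t}. real_of_int (moebius d) * gg k d)"
    by (rule infsum_cmult_right')
  also have "\<dots> = gg k t * (xi k / (\<Prod>p\<in>prime_factors t. 1 - aa k p))"
    using euler[OF k t0] by simp
  also have "\<dots> = xi k * (\<Prod>p\<in>prime_factors t. aa k p / (1 - aa k p))"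
    unfolding gg_def by (simp add: prod_dividef)
  finally show ?thesis .
qed

lemma aux_real: assumes "(x::real) \<ge> 4" shows "1/(x-1)^2 / (1 - 1/(x-1)^2) = 1/x^2 * (1/(1-2/x))"
proof -
  have h1: "(x-1)^2 - 1 = x * (x - 2)" by (simp add: power2_eq_square algebra_simps)
  have n1: "(x-1)^2 \<noteq> 0" using assms by simp
  have n2: "x * (x - 2) \<noteq> 0" using assms by simp
  have "1/(x-1)^2 / (1 - 1/(x-1)^2) = 1 / ((x-1)^2 - 1)"
    using n1 h1 n2 by (simp add: field_simps)
  also have "\<dots> = 1 / (x * (x-2))" using h1 by simp
  also have "\<dots> = 1/x^2 * (1/(1-2/x))"
    using assms by (simp add: field_simps power2_eq_square)
  finally show ?thesis .
qed

lemma local_factor: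
  fixes k p :: nat
  assumes k: "k \<ge> 2" and p: "prime p"
  shows "aa k p / (1 - aa k p) = 1 / real p ^ (2 * k) * (1 / (1 - 2 / real p ^ k))"
proof -
  define x where "x = real p ^ k"
  have p2: "real p \<ge> 2" using p prime_ge_2_nat by auto
  have h: "real p ^ 2 \<le> real p ^ k" using k p2 by (intro power_increasing) auto
  have "real p * 2 \<le> real p * real p" using p2 by (intro mult_left_mono) auto
  then have "real p ^ 2 \<ge> 4" using p2 unfolding power2_eq_square by linarith
  then have x4: "x \<ge> 4" using h unfolding x_def by linarith
  have e: "real p ^ (2 * k) = x ^ 2" unfolding x_def by (simp add: power_mult mult.commute)
  have "aa k p / (1 - aa k p) = 1/(x-1)^2 / (1 - 1/(x-1)^2)" unfolding aa_def x_def by simp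
  also have "\<dots> = 1/x^2 * (1/(1-2/x))" by (rule aux_real[OF x4])
  also have "\<dots> = 1 / real p ^ (2 * k) * (1 / (1 - 2 / real p ^ k))" unfolding e x_def ..
  finally show ?thesis .
qed

lemma rhs_term:
  fixes k t :: nat
  assumes k: "k \<ge> 2" and t: "squarefree t"
  shows "(\<Prod>p\<in>prime_factors t. aa k p / (1 - aa k p))
       = \<bar>real_of_int (moebius t)\<bar> / real t ^ (2 * k) * (\<Prod>p\<in>prime_factors t. 1 / (1 - 2 / real p ^ k))"
proof -
  have t0: "t > 0" using t by (metis gr0I not_squarefree_0)
  have m: "\<bar>real_of_int (moebius t)\<bar> = 1" unfolding moebius_def using t t0 by simp
  have "(\<Prod>p\<in>prime_factors t. aa k p / (1 - aa k p))
       = (\<Prod>p\<in>prime_factors t. 1 / real p ^ (2 * k) * (1 / (1 - 2 / real p ^ k)))"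
    using local_factor[OF k] by (intro prod.cong) (auto dest: in_prime_factors_imp_prime)
  also have "\<dots> = (\<Prod>p\<in>prime_factors t. 1 / real p ^ (2 * k)) * (\<Prod>p\<in>prime_factors t. 1 / (1 - 2 / real p ^ k))"
    by (rule prod.distrib)
  also have "(\<Prod>p\<in>prime_factors t. 1 / real p ^ (2 * k)) = 1 / real (\<Prod>(prime_factors t)) ^ (2 * k)"
    by (simp add: prod_dividef prod_power_distrib)
  also have "\<dots> = 1 / real t ^ (2 * k)" using prod_prime_factors_squarefree[OF t] by simp
  finally show ?thesis using m by simp
qed

theorem lemma2p3:
  fixes k c :: nat
  assumes "k \<ge> 2" and "c \<ge> 1"
  shows "z k c = xi k * (\<Sum>\<^sub>\<infinity> t \<in> {t. t \<ge> 1 \<and> root k (real c) \<le> real t}.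
            \<bar>real_of_int (moebius t)\<bar> / real t ^ (2 * k) *
            (\<Prod>p\<in>prime_factors t. 1 / (1 - 2 / real p ^ k)))"
proof -
  note k = assms(1)
  define h where "h = (\<lambda>t::nat. \<bar>real_of_int (moebius t)\<bar> / real t ^ (2 * k) *
            (\<Prod>p\<in>prime_factors t. 1 / (1 - 2 / real p ^ k)))"
  define S where "S = (\<lambda>r. \<Sum>\<^sub>\<infinity> d \<in> {d::nat. d \<ge> 1}. ff k r d)"
  define Tset where "Tset = {t::nat. t \<ge> 1 \<and> c \<le> t ^ k}"
  have k0: "k > 0" using k by simp
  have Tset_eq: "{t::nat. t \<ge> 1 \<and> root k (real c) \<le> real t} = Tset"
  proof -
    have "root k (real c) \<le> real t \<longleftrightarrow> c \<le> t ^ k" for t :: nat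
    proof -
      have "root k (real c) \<le> real t \<longleftrightarrow> root k (real c) \<le> root k (real t ^ k)"
        using k0 by (simp add: real_root_power_cancel)
      also have "\<dots> \<longleftrightarrow> real c \<le> real t ^ k" using k0 by simp
      also have "\<dots> \<longleftrightarrow> c \<le> t ^ k" by (metis of_nat_le_iff of_nat_power)
      finally show ?thesis .
    qed
    then show ?thesis unfolding Tset_def by auto
  qed
  have inj: "inj_on (\<lambda>t::nat. t ^ k) A" for A
    using k0 by (intro inj_onI) (simp add: power_eq_iff_eq_base)
  have "z k c = infsum S {r. r \<ge> 1 \<and> r \<ge> c}" unfolding z_alt S_def ..
  also have "\<dots> = infsum S ((\<lambda>t. t ^ k) ` Tset)"
  proof (rule infsum_cong_neutral)
    fix r assume r: "r \<in> {r. r \<ge> 1 \<and> r \<ge> c} - (\<lambda>t. t ^ k) ` Tset"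
    have "\<not> (\<exists>t. squarefree t \<and> r = t ^ k)"
    proof
      assume "\<exists>t. squarefree t \<and> r = t ^ k"
      then obtain t where "squarefree t" "r = t ^ k" by blast
      moreover have "t \<ge> 1" using \<open>squarefree t\<close> by (metis less_one not_le not_squarefree_0)
      ultimately have "r \<in> (\<lambda>t. t ^ k) ` Tset" using r unfolding Tset_def by auto
      then show False using r by blast
    qed
    then show "S r = 0" unfolding S_def using inner_vanish[OF k] r by auto
  next
    fix r assume "r \<in> (\<lambda>t. t ^ k) ` Tset - {r. r \<ge> 1 \<and> r \<ge> c}"
    then show "S r = 0" unfolding Tset_def by auto
  qed auto
  also have "\<dots> = infsum (S \<circ> (\<lambda>t. t ^ k)) Tset" by (rule infsum_reindex[OF inj])
  also have "\<dots> = infsum (\<lambda>t. xi k * h t) Tset"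
  proof (rule infsum_cong)
    fix t assume t: "t \<in> Tset"
    show "(S \<circ> (\<lambda>t. t ^ k)) t = xi k * h t"
    proof (cases "squarefree t")
      case True
      then show ?thesis unfolding S_def h_def comp_def
        using inner_power[OF k True] rhs_term[OF k True] by simp
    next
      case False
      have "moebius t = 0" using False unfolding moebius_def by auto
      then have "h t = 0" unfolding h_def by simp
      moreover have "\<not> (\<exists>s. squarefree s \<and> t ^ k = s ^ k)"
        using False k0 by (auto simp: power_eq_iff_eq_base)
      moreover have "t ^ k > 0" using t unfolding Tset_def by simp
      ultimately show ?thesis unfolding S_def comp_def using inner_vanish[OF k] by simp
    qed
  qed
  also have "\<dots> = xi k * infsum h Tset" by (rule infsum_cmult_right')
  finally show ?thesis unfolding h_def Tset_eq .
qed

end
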